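(* Let $\Omega$ be a countable set, $G$ a closed subgroup of $S=\mathrm{Sym}(\Omega)$, and $(\Delta_i)_{i\in I}$ a family of subsets of $\Omega$. Then either (i) there exists a finite set $\Gamma\subseteq\Omega$ such that $G_{(\Gamma)}\le S_{\{\Delta_i\}}$ for all but finitely many $i\in I$, or (ii) there exists $g\in G$ such that $g\notin S_{\{\Delta_i\}}$ for infinitely many $i\in I$. Moreover, if all $\Delta_i$ are finite, then in (i) "all but finitely many" can be strengthened to "all".
   Context: $\mathrm{Sym}(\Omega)$ is the group of all permutations of $\Omega$ (acting on the right), with the function topology (pointwise convergence, $\Omega$ discrete); "closed" means closed in $S$. $G_{(\Gamma)}$ is the pointwise stabilizer of $\Gamma$ in $G$, and $S_{\{\Delta\}}=\{f\in S:\Delta f=\Delta\}$ is the setwise stabilizer. *)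

theory Defs
  imports "HOL-Analysis.Analysis" "HOL-Algebra.Bij"
begin

text \<open>Omega is the (countable) universe of the type 'a. Sym(Omega) = all bijections.\<close>
definition Sym :: "('a \<Rightarrow> 'a) set" where
  "Sym = {f. bij f}"

definition pointwise_top :: "('a \<Rightarrow> 'a) topology" where
  "pointwise_top = product_topology (\<lambda>_. discrete_topology UNIV) UNIV"

definition closed_subgroup_Sym :: "('a \<Rightarrow> 'a) set \<Rightarrow> bool" where
  "closed_subgroup_Sym G \<longleftrightarrow>
     subgroup G (BijGroup (UNIV :: 'a set)) \<and>
     closedin (subtopology pointwise_top Sym) G"

definition pstab :: "('a \<Rightarrow> 'a) set \<Rightarrow> 'a set \<Rightarrow> ('a \<Rightarrow> 'a) set" where
  "pstab G \<Gamma> = {g \<in> G. \<forall>x\<in>\<Gamma>. g x = x}"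

definition sstab :: "'a set \<Rightarrow> ('a \<Rightarrow> 'a) set" where
  "sstab \<Delta> = {f \<in> Sym. f ` \<Delta> = \<Delta>}"

end

theory Submission
  imports Defs
begin

lemma G_bij: "closed_subgroup_Sym G \<Longrightarrow> g \<in> G \<Longrightarrow> bij g"
  unfolding closed_subgroup_Sym_def
  using subgroup.subset by (fastforce simp: BijGroup_def Bij_def)

lemma G_comp: "closed_subgroup_Sym G \<Longrightarrow> g \<in> G \<Longrightarrow> k \<in> G \<Longrightarrow> g \<circ> k \<in> G"
proof -
  assume a: "closed_subgroup_Sym G" "g \<in> G" "k \<in> G"
  then have s: "subgroup G (BijGroup (UNIV::'a set))" by (simp add: closed_subgroup_Sym_def)
  have "g \<otimes>\<^bsub>BijGroup UNIV\<^esub> k \<in> G" using subgroup.m_closed[OF s] a by blast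
  moreover have "g \<in> Bij UNIV" "k \<in> Bij UNIV" using subgroup.subset[OF s] a by (auto simp: BijGroup_def)
  moreover have "(\<lambda>x\<in>UNIV. g (k x)) = (\<lambda>x. g (k x))" by (simp add: restrict_def)
  ultimately show ?thesis by (simp add: BijGroup_def compose_def o_def)
qed

lemma G_ne: "closed_subgroup_Sym G \<Longrightarrow> \<exists>g. g \<in> G"
  unfolding closed_subgroup_Sym_def using subgroup.one_closed by blast

lemma closed_lim:
  assumes G: "closed_subgroup_Sym G" and b: "bij g"
    and ap: "\<And>F. finite F \<Longrightarrow> \<exists>h\<in>G. \<forall>x\<in>F. h x = g x"
  shows "g \<in> G"
proof (rule ccontr)
  assume ng: "g \<notin> G"
  have tp: "topspace (pointwise_top :: ('a \<Rightarrow> 'a) topology) = UNIV"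
    by (simp add: pointwise_top_def)
  have "closedin (subtopology pointwise_top Sym) G" using G by (simp add: closed_subgroup_Sym_def)
  then have "openin (subtopology pointwise_top Sym) (Sym - G)"
    by (simp add: closedin_def tp)
  then obtain T where T: "openin pointwise_top T" "Sym - G = T \<inter> Sym"
    by (auto simp: openin_subtopology)
  have gS: "g \<in> Sym" using b by (simp add: Sym_def)
  have "g \<in> T" using T gS ng by blast
  then obtain U where U: "finite {i. U i \<noteq> UNIV}" "g \<in> Pi\<^sub>E UNIV U" "Pi\<^sub>E UNIV U \<subseteq> T"
    using T(1) unfolding pointwise_top_def openin_product_topology_alt by force
  obtain h where h: "h \<in> G" "\<forall>x\<in>{i. U i \<noteq> UNIV}. h x = g x" using ap[OF U(1)] by blast
  have "h \<in> Pi\<^sub>E UNIV U" using U(2) h(2) by (auto simp: PiE_def Pi_def) (metis UNIV_I)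
  then have "h \<in> T" using U(3) by blast
  moreover have "h \<in> Sym" using G_bij[OF G h(1)] by (simp add: Sym_def)
  ultimately show False using T(2) h(1) by blast
qed


lemma bij_img_iff: "bij f \<Longrightarrow> f ` D = D \<longleftrightarrow> (\<forall>x. x \<in> D \<longleftrightarrow> f x \<in> D)"
proof
  assume b: "bij f" and e: "f ` D = D"
  show "\<forall>x. x \<in> D \<longleftrightarrow> f x \<in> D"
  proof
    fix x
    show "x \<in> D \<longleftrightarrow> f x \<in> D"
    proof
      assume "x \<in> D" then show "f x \<in> D" using e by blast
    next
      assume "f x \<in> D" then have "f x \<in> f ` D" using e by simp
      then show "x \<in> D" using bij_is_inj[OF b] by (simp add: inj_image_mem_iff)
    qed
  qed
next
  assume b: "bij f" and h: "\<forall>x. x \<in> D \<longleftrightarrow> f x \<in> D"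
  show "f ` D = D"
  proof
    show "f ` D \<subseteq> D" using h by blast
    show "D \<subseteq> f ` D"
    proof
      fix y assume y: "y \<in> D"
      obtain x where "y = f x" using bij_is_surj[OF b] by blast
      then show "y \<in> f ` D" using h y by blast
    qed
  qed
qed

lemma step:
  assumes G: "closed_subgroup_Sym G"
    and notI: "\<forall>\<Gamma>. finite \<Gamma> \<longrightarrow> infinite {i \<in> I. \<not> pstab G \<Gamma> \<subseteq> sstab (\<Delta> i)}"
    and notII: "\<forall>g\<in>G. finite {i \<in> I. g \<notin> sstab (\<Delta> i)}"
    and g: "g \<in> G" and fin: "finite \<Gamma>"
  shows "\<exists>g' \<Gamma>' i. g' \<in> G \<and> finite \<Gamma>' \<and> \<Gamma> \<subseteq> \<Gamma>' \<and> e \<in> \<Gamma>' \<and> inv_into UNIV g e \<in> \<Gamma>'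
     \<and> (\<forall>x\<in>\<Gamma> \<union> {e, inv_into UNIV g e}. g' x = g x) \<and> i \<in> I \<and> g \<in> sstab (\<Delta> i)
     \<and> (\<exists>x\<in>\<Gamma>'. (x \<in> \<Delta> i) \<noteq> (g' x \<in> \<Delta> i))"
proof -
  define \<Gamma>2 where "\<Gamma>2 = \<Gamma> \<union> {e, inv_into UNIV g e}"
  have f2: "finite \<Gamma>2" using fin by (simp add: \<Gamma>2_def)
  let ?A = "{i \<in> I. \<not> pstab G \<Gamma>2 \<subseteq> sstab (\<Delta> i)}"
  let ?B = "{i \<in> I. g \<notin> sstab (\<Delta> i)}"
  have "infinite ?A" using notI f2 by blast
  moreover have "finite ?B" using notII g by blast
  ultimately have "infinite (?A - ?B)" using Diff_infinite_finite by blast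
  then have "?A - ?B \<noteq> {}" by (metis finite.emptyI)
  then obtain i where i: "i \<in> ?A" "i \<notin> ?B" by blast
  then obtain k where k: "k \<in> pstab G \<Gamma>2" "k \<notin> sstab (\<Delta> i)" by blast
  have kG: "k \<in> G" and kfix: "\<forall>x\<in>\<Gamma>2. k x = x" using k(1) by (auto simp: pstab_def)
  have bk: "bij k" using G_bij[OF G kG] .
  have bg: "bij g" using G_bij[OF G g] .
  have kD: "k ` \<Delta> i \<noteq> \<Delta> i" using k(2) bk by (simp add: sstab_def Sym_def)
  have gS: "g \<in> sstab (\<Delta> i)" using i by auto
  then have gD: "g ` \<Delta> i = \<Delta> i" by (simp add: sstab_def)
  define g' where "g' = g \<circ> k"
  have g'G: "g' \<in> G" using G_comp[OF G g kG] by (simp add: g'_def)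
  have bg': "bij g'" using G_bij[OF G g'G] .
  have "g' ` \<Delta> i = g ` (k ` \<Delta> i)" by (simp add: g'_def image_comp)
  also have "\<dots> \<noteq> g ` \<Delta> i" using kD bij_is_inj[OF bg] by (simp add: inj_image_eq_iff)
  finally have "g' ` \<Delta> i \<noteq> \<Delta> i" using gD by simp
  then obtain x where x: "(x \<in> \<Delta> i) \<noteq> (g' x \<in> \<Delta> i)" using bij_img_iff[OF bg'] by blast
  have agree: "\<forall>x\<in>\<Gamma>2. g' x = g x" using kfix by (simp add: g'_def)
  have "x \<in> \<Gamma>2 \<union> {x}" by simp
  then have wit: "\<exists>y\<in>\<Gamma>2 \<union> {x}. (y \<in> \<Delta> i) \<noteq> (g' y \<in> \<Delta> i)" using x by blast
  have "\<Gamma> \<subseteq> \<Gamma>2 \<union> {x}" "e \<in> \<Gamma>2 \<union> {x}" "inv_into UNIV g e \<in> \<Gamma>2 \<union> {x}" "finite (\<Gamma>2 \<union> {x})"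
    using f2 by (auto simp: \<Gamma>2_def)
  moreover have "\<forall>y\<in>\<Gamma> \<union> {e, inv_into UNIV g e}. g' y = g y" using agree by (simp add: \<Gamma>2_def)
  moreover have "i \<in> I" using i by simp
  ultimately show ?thesis
    apply -
    apply (rule exI[of _ g'], rule exI[of _ "\<Gamma>2 \<union> {x}"], rule exI[of _ i])
    using g'G gS wit by (intro conjI) assumption+
qed


lemma core:
  fixes G :: "('a::countable \<Rightarrow> 'a) set" and I :: "'i set" and \<Delta> :: "'i \<Rightarrow> 'a set"
  assumes G: "closed_subgroup_Sym G"
    and notI: "\<forall>\<Gamma>. finite \<Gamma> \<longrightarrow> infinite {i \<in> I. \<not> pstab G \<Gamma> \<subseteq> sstab (\<Delta> i)}"
    and notII: "\<forall>g\<in>G. finite {i \<in> I. g \<notin> sstab (\<Delta> i)}"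
  shows False
proof -
  define Q where "Q = (\<lambda>(n::nat) (g::'a\<Rightarrow>'a) (\<Gamma>::'a set) (g'::'a\<Rightarrow>'a) (\<Gamma>'::'a set) (i::'i).
     g' \<in> G \<and> finite \<Gamma>' \<and> \<Gamma> \<subseteq> \<Gamma>' \<and> from_nat n \<in> \<Gamma>' \<and> inv_into UNIV g (from_nat n) \<in> \<Gamma>'
     \<and> (\<forall>x\<in>\<Gamma> \<union> {from_nat n, inv_into UNIV g (from_nat n)}. g' x = g x) \<and> i \<in> I \<and> g \<in> sstab (\<Delta> i)
     \<and> (\<exists>x\<in>\<Gamma>'. (x \<in> \<Delta> i) \<noteq> (g' x \<in> \<Delta> i)))"
  obtain g0 where g0: "g0 \<in> G" using G_ne[OF G] by blast
  define seq where "seq = rec_nat (g0, {}, undefined)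
      (\<lambda>n st. SOME st'. Q n (fst st) (fst (snd st)) (fst st') (fst (snd st')) (snd (snd st')))"
  define gs where "gs n = fst (seq n)" for n
  define Gs where "Gs n = fst (snd (seq n))" for n
  define js where "js n = snd (snd (seq n))" for n
  have seqS: "seq (Suc n) = (SOME st'. Q n (gs n) (Gs n) (fst st') (fst (snd st')) (snd (snd st')))" for n
    by (simp add: seq_def gs_def Gs_def)
  have stepQ: "Q k (gs k) (Gs k) (gs (Suc k)) (Gs (Suc k)) (js (Suc k))"
    if a: "gs k \<in> G" "finite (Gs k)" for k
  proof -
    have "\<exists>g' \<Gamma>' i. Q k (gs k) (Gs k) g' \<Gamma>' i"
      unfolding Q_def using step[OF G notI notII a] by simp
    then have "\<exists>st'. Q k (gs k) (Gs k) (fst st') (fst (snd st')) (snd (snd st'))" by auto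
    from someI_ex[OF this] show ?thesis
      unfolding gs_def[of "Suc k"] Gs_def[of "Suc k"] js_def[of "Suc k"] seqS[of k] .
  qed
  have inv: "gs n \<in> G \<and> finite (Gs n) \<and> Q n (gs n) (Gs n) (gs (Suc n)) (Gs (Suc n)) (js (Suc n))" for n
  proof (induction n)
    case 0
    have a: "gs 0 \<in> G" "finite (Gs 0)" using g0 by (simp_all add: gs_def Gs_def seq_def)
    then show ?case using stepQ by blast
  next
    case (Suc n)
    have a: "gs (Suc n) \<in> G" "finite (Gs (Suc n))" using Suc by (simp_all add: Q_def)
    then show ?case using stepQ by blast
  qed
  have gsG: "gs n \<in> G" for n using inv by blast
  have gsb: "bij (gs n)" for n using G_bij[OF G gsG] .
  have mono: "x \<in> Gs m \<and> gs m x = gs n x" if "n \<le> m" "x \<in> Gs n" for n m x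
    using that(1)
  proof (induction m rule: dec_induct)
    case base then show ?case using that(2) by simp
  next
    case (step m)
    have "Gs m \<subseteq> Gs (Suc m)" "\<forall>y\<in>Gs m. gs (Suc m) y = gs m y"
      using inv[of m] unfolding Q_def by auto
    then show ?case using step.IH by auto
  qed
  have en: "from_nat n \<in> Gs (Suc n)" "inv_into UNIV (gs n) (from_nat n) \<in> Gs (Suc n)"
     "gs (Suc n) (inv_into UNIV (gs n) (from_nat n)) = from_nat n" for n
  proof -
    have q: "Q n (gs n) (Gs n) (gs (Suc n)) (Gs (Suc n)) (js (Suc n))" using inv by blast
    then show "from_nat n \<in> Gs (Suc n)" "inv_into UNIV (gs n) (from_nat n) \<in> Gs (Suc n)"
      unfolding Q_def by auto
    have "gs (Suc n) (inv_into UNIV (gs n) (from_nat n)) = gs n (inv_into UNIV (gs n) (from_nat n))"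
      using q unfolding Q_def by auto
    also have "\<dots> = from_nat n" using gsb[of n] by (simp add: bij_is_surj f_inv_into_f)
    finally show "gs (Suc n) (inv_into UNIV (gs n) (from_nat n)) = from_nat n" .
  qed
  define g where "g x = gs (Suc (to_nat x)) x" for x
  have inG: "x \<in> Gs (Suc (to_nat x))" for x using en(1)[of "to_nat x"] by simp
  have lim: "gs m x = g x" if "Suc (to_nat x) \<le> m" for m x
    using mono[OF that inG] by (simp add: g_def)
  have inj: "inj g"
  proof (rule injI)
    fix x y assume e: "g x = g y"
    define m where "m = Suc (max (to_nat x) (to_nat y))"
    have "gs m x = gs m y" using lim[of x m] lim[of y m] e by (simp add: m_def)
    then show "x = y" using bij_is_inj[OF gsb[of m]] by (simp add: inj_eq)
  qed
  have surj: "surj g"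
  proof -
    have "y \<in> range g" for y
    proof -
      define n where "n = to_nat y"
      define z where "z = inv_into UNIV (gs n) y"
      have zi: "z \<in> Gs (Suc n)" and zv: "gs (Suc n) z = y" using en[of n] by (simp_all add: n_def z_def)
      define m where "m = max (Suc n) (Suc (to_nat z))"
      have "gs m z = gs (Suc n) z" using mono[of "Suc n" m z] zi by (simp add: m_def)
      moreover have "gs m z = g z" using lim[of z m] by (simp add: m_def)
      ultimately show ?thesis using zv by (metis rangeI)
    qed
    then show ?thesis by blast
  qed
  have gG: "g \<in> G"
  proof (rule closed_lim[OF G])
    show "bij g" using inj surj by (simp add: bij_def)
    fix F :: "'a set" assume fF: "finite F"
    define m where "m = Suc (Max (insert 0 (to_nat ` F)))"
    have "\<forall>x\<in>F. gs m x = g x"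
    proof
      fix x assume "x \<in> F"
      then have "to_nat x \<le> Max (insert 0 (to_nat ` F))" using fF by simp
      then show "gs m x = g x" using lim[of x m] by (simp add: m_def)
    qed
    then show "\<exists>h\<in>G. \<forall>x\<in>F. h x = g x" using gsG by blast
  qed
  define j where "j n = js (Suc n)" for n
  have jp: "j n \<in> I \<and> gs n \<in> sstab (\<Delta> (j n)) \<and> (\<exists>x\<in>Gs (Suc n). (x \<in> \<Delta> (j n)) \<noteq> (gs (Suc n) x \<in> \<Delta> (j n)))" for n
    using inv[of n] unfolding Q_def j_def by blast
  have fixiff: "(x \<in> \<Delta> (j n)) = (gs n x \<in> \<Delta> (j n))" for n x
    using jp[of n] bij_img_iff[OF gsb[of n]] by (simp add: sstab_def)
  have moved: "g \<notin> sstab (\<Delta> (j n))" for n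
  proof
    assume "g \<in> sstab (\<Delta> (j n))"
    then have h: "\<forall>x. (x \<in> \<Delta> (j n)) = (g x \<in> \<Delta> (j n))"
      using bij_img_iff[of g] inj surj by (simp add: sstab_def bij_def)
    obtain x where x: "x \<in> Gs (Suc n)" "(x \<in> \<Delta> (j n)) \<noteq> (gs (Suc n) x \<in> \<Delta> (j n))" using jp by blast
    define m where "m = max (Suc n) (Suc (to_nat x))"
    have "gs m x = gs (Suc n) x" using mono[of "Suc n" m x] x(1) by (simp add: m_def)
    moreover have "gs m x = g x" using lim[of x m] by (simp add: m_def)
    ultimately show False using h x(2) by metis
  qed
  have injj: "inj j"
  proof -
    have ne: "j m \<noteq> j n" if "m < n" for m n
    proof
      assume e: "j m = j n"
      obtain x where x: "x \<in> Gs (Suc m)" "(x \<in> \<Delta> (j m)) \<noteq> (gs (Suc m) x \<in> \<Delta> (j m))" using jp by blast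
      have "gs n x = gs (Suc m) x" using mono[of "Suc m" n x] x(1) that by simp
      then show False using fixiff[where n=n and x=x] x(2) e by simp
    qed
    show ?thesis by (rule injI) (metis ne linorder_neqE_nat)
  qed
  have "range j \<subseteq> {i \<in> I. g \<notin> sstab (\<Delta> i)}" using jp moved by blast
  moreover have "infinite (range j)" using injj range_inj_infinite by blast
  ultimately have "infinite {i \<in> I. g \<notin> sstab (\<Delta> i)}" using finite_subset by blast
  then show False using notII gG by blast
qed


theorem lemma11p2:
  fixes G :: "('a::countable \<Rightarrow> 'a) set"
    and I :: "'i set" and \<Delta> :: "'i \<Rightarrow> 'a set"
  assumes "closed_subgroup_Sym G"
  shows "((\<exists>\<Gamma>. finite \<Gamma> \<and> finite {i \<in> I. \<not> pstab G \<Gamma> \<subseteq> sstab (\<Delta> i)})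
            \<or> (\<exists>g\<in>G. infinite {i \<in> I. g \<notin> sstab (\<Delta> i)}))
       \<and> ((\<forall>i\<in>I. finite (\<Delta> i)) \<longrightarrow>
            ((\<exists>\<Gamma>. finite \<Gamma> \<and> (\<forall>i\<in>I. pstab G \<Gamma> \<subseteq> sstab (\<Delta> i)))
             \<or> (\<exists>g\<in>G. infinite {i \<in> I. g \<notin> sstab (\<Delta> i)})))"
proof -
  have P1: "(\<exists>\<Gamma>. finite \<Gamma> \<and> finite {i \<in> I. \<not> pstab G \<Gamma> \<subseteq> sstab (\<Delta> i)})
            \<or> (\<exists>g\<in>G. infinite {i \<in> I. g \<notin> sstab (\<Delta> i)})"
  proof (rule ccontr)
    assume n: "\<not> ?thesis"
    have "\<forall>\<Gamma>. finite \<Gamma> \<longrightarrow> infinite {i \<in> I. \<not> pstab G \<Gamma> \<subseteq> sstab (\<Delta> i)}" using n by blast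
    moreover have "\<forall>g\<in>G. finite {i \<in> I. g \<notin> sstab (\<Delta> i)}" using n by blast
    ultimately show False using core[OF assms] by blast
  qed
  have P2: "(\<exists>\<Gamma>. finite \<Gamma> \<and> (\<forall>i\<in>I. pstab G \<Gamma> \<subseteq> sstab (\<Delta> i)))
             \<or> (\<exists>g\<in>G. infinite {i \<in> I. g \<notin> sstab (\<Delta> i)})" if fin: "\<forall>i\<in>I. finite (\<Delta> i)"
    using P1
  proof
    assume "\<exists>\<Gamma>. finite \<Gamma> \<and> finite {i \<in> I. \<not> pstab G \<Gamma> \<subseteq> sstab (\<Delta> i)}"
    then obtain \<Gamma> where \<Gamma>: "finite \<Gamma>" "finite {i \<in> I. \<not> pstab G \<Gamma> \<subseteq> sstab (\<Delta> i)}" by blast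
    define E where "E = {i \<in> I. \<not> pstab G \<Gamma> \<subseteq> sstab (\<Delta> i)}"
    define \<Gamma>' where "\<Gamma>' = \<Gamma> \<union> \<Union> (\<Delta> ` E)"
    have "finite \<Gamma>'" unfolding \<Gamma>'_def using \<Gamma> fin by (auto simp: E_def)
    moreover have "\<forall>i\<in>I. pstab G \<Gamma>' \<subseteq> sstab (\<Delta> i)"
    proof (intro ballI subsetI)
      fix i k assume i: "i \<in> I" and k: "k \<in> pstab G \<Gamma>'"
      show "k \<in> sstab (\<Delta> i)"
      proof (cases "i \<in> E")
        case False
        have "k \<in> pstab G \<Gamma>" using k by (auto simp: pstab_def \<Gamma>'_def)
        then show ?thesis using False i by (auto simp: E_def)
      next
        case True
        have kG: "k \<in> G" and kf: "\<forall>x\<in>\<Delta> i. k x = x" using k True by (auto simp: pstab_def \<Gamma>'_def)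
        have "k ` \<Delta> i = \<Delta> i" using kf by (metis image_cong image_ident)
        moreover have "bij k" using G_bij[OF assms kG] .
        ultimately show ?thesis by (simp add: sstab_def Sym_def)
      qed
    qed
    ultimately show ?thesis by blast
  qed blast
  show ?thesis using P1 P2 by blast
qed

end
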